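(* Consider the generic SURQT model (6) described in the context, and let $(\mathbf{R}(t),\mathbf{T}(t))$ be any solution with initial value in $\Omega$. Then for every $i=1,\dots,N$, \[ \limsup_{t\to\infty}R_i(t)\le \frac{f_i^T(\mathbf{1})}{f_i^T(\mathbf{1})+\theta_i},\qquad \liminf_{t\to\infty}T_i(t)\ge \frac{\theta_i\delta_i}{\left[f_i^T(\mathbf{1})+\theta_i\right]\left[f_i^T(\mathbf{1})+\delta_i\right]}, \] where $\mathbf{1}=(1,\dots,1)$.
   Context: $V=\{1,\dots,N\}$; $G_R=(V,E_R)$ and $G_T=(V,E_T)$ are strongly connected directed graphs. $\theta_i>0,\delta_i>0$ for all $i$; $\mathbf{D}_\theta=\mathrm{diag}(\theta_i)$, $\mathbf{D}_\delta=\mathrm{diag}(\delta_i)$. The functions $f_i^T,g_i^R:\mathbb{R}^N\to\mathbb{R}$ ($i=1,\dots,N$) satisfy: (C1) $f_i^T(x_1,\dots,x_N)$ depends on $x_j$ iff $(i,j)\in E_R$, and $g_i^R$ depends on $x_j$ iff $(i,j)\in E_T$; (C2) $f_i^T(\mathbf 0)=g_i^R(\mathbf 0)=0$; (C3) they are twice continuously differentiable; (C4) each is strictly increasing in each of its arguments; (C5) each is concave. The generic SURQT model (6) is the system, for $t\ge0$, $i=1,\dots,N$, \[ \frac{dR_i}{dt}=T_i f_i^T(\mathbf{R})-R_i g_i^R(\mathbf{T})-\theta_iR_i,\qquad \frac{dT_i}{dt}=R_i g_i^R(\mathbf{T})-T_i f_i^T(\mathbf{R})+\delta_i(1-R_i-T_i),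 \] with $\mathbf{R}=(R_1,\dots,R_N)$, $\mathbf{T}=(T_1,\dots,T_N)$, and initial state in $\Omega=\{(x_1,\dots,x_{2N})\in\mathbb{R}_+^{2N}: x_i+x_{N+i}\le1,\ 1\le i\le N\}$ (which is positively invariant). *)

theory Defs
  imports "HOL-Analysis.Analysis"
begin

definition strongly_connected :: "('n \<times> 'n) set \<Rightarrow> bool" where
  "strongly_connected E \<longleftrightarrow> (\<forall>i j. (i, j) \<in> E\<^sup>*)"

definition depends_on :: "((real^'n) \<Rightarrow> real) \<Rightarrow> 'n \<Rightarrow> bool" where
  "depends_on h j \<longleftrightarrow> (\<exists>x y. (\<forall>k. k \<noteq> j \<longrightarrow> x $ k = y $ k) \<and> h x \<noteq> h y)"

definition strictly_incr_in :: "((real^'n) \<Rightarrow> real) \<Rightarrow> 'n \<Rightarrow> bool" where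
  "strictly_incr_in h j \<longleftrightarrow>
     (\<forall>x y. (\<forall>k. k \<noteq> j \<longrightarrow> x $ k = y $ k) \<and> x $ j < y $ j \<longrightarrow> h x < h y)"

definition C2 :: "((real^'n) \<Rightarrow> real) \<Rightarrow> bool" where
  "C2 h \<longleftrightarrow> (\<exists>(D1 :: (real^'n) \<Rightarrow> ((real^'n) \<Rightarrow>\<^sub>L real))
                 (D2 :: (real^'n) \<Rightarrow> ((real^'n) \<Rightarrow>\<^sub>L ((real^'n) \<Rightarrow>\<^sub>L real))).
      (\<forall>x. (h has_derivative blinfun_apply (D1 x)) (at x)) \<and>
      (\<forall>x. (D1 has_derivative blinfun_apply (D2 x)) (at x)) \<and>
      continuous_on UNIV D2)"

text \<open>Conditions (C1)-(C5) for the infection functions f_i^T (graph E_R) and g_i^R (graph E_T).\<close>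
definition admissible_fun :: "('n \<times> 'n) set \<Rightarrow> ('n \<Rightarrow> (real^'n) \<Rightarrow> real) \<Rightarrow> bool" where
  "admissible_fun E F \<longleftrightarrow>
     (\<forall>i j. depends_on (F i) j \<longleftrightarrow> (i, j) \<in> E) \<and>
     (\<forall>i. F i 0 = 0) \<and>
     (\<forall>i. C2 (F i)) \<and>
     (\<forall>i j. (i, j) \<in> E \<longrightarrow> strictly_incr_in (F i) j) \<and>
     (\<forall>i. concave_on UNIV (F i))"

definition SURQT_solution ::
  "('n \<Rightarrow> (real^'n) \<Rightarrow> real) \<Rightarrow> ('n \<Rightarrow> (real^'n) \<Rightarrow> real) \<Rightarrow> ('n \<Rightarrow> real) \<Rightarrow> ('n \<Rightarrow> real)
    \<Rightarrow> (real \<Rightarrow> (real^'n)) \<Rightarrow> (real \<Rightarrow> (real^'n)) \<Rightarrow> bool" where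
  "SURQT_solution f g \<theta> \<delta> R T \<longleftrightarrow>
     (\<forall>t\<ge>0. \<forall>i.
        ((\<lambda>s. R s $ i) has_real_derivative
            (T t $ i * f i (R t) - R t $ i * g i (T t) - \<theta> i * R t $ i)) (at t within {0..}) \<and>
        ((\<lambda>s. T s $ i) has_real_derivative
            (R t $ i * g i (T t) - T t $ i * f i (R t) + \<delta> i * (1 - R t $ i - T t $ i))) (at t within {0..}))"

definition Omega :: "((real^'n) \<times> (real^'n)) set" where
  "Omega = {(r, s). \<forall>i. 0 \<le> r $ i \<and> 0 \<le> s $ i \<and> r $ i + s $ i \<le> 1}"

end

theory Submission imports Defs "HOL-Real_Asymp.Real_Asymp" begin

definition negp :: "real \<Rightarrow> real" where "negp a = max (-a) 0"
definition hsq :: "real \<Rightarrow> real" where "hsq a = (negp a)^2"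

lemma hsq_deriv: "(hsq has_real_derivative (-2 * negp a)) (at a)"
proof (cases "a < 0")
  case True
  have "((\<lambda>y. y^2) has_real_derivative (2 * a)) (at a)"
    by (auto intro!: derivative_eq_intros)
  then have "((\<lambda>y. y^2) has_real_derivative (-2 * negp a)) (at a)"
    using True by (simp add: negp_def)
  then show ?thesis
    by (rule has_field_derivative_transform_within_open[where S="{..<0}"])
       (use True in \<open>auto simp: hsq_def negp_def\<close>)
next
  case False
  show ?thesis
  proof (cases "a > 0")
    case True
    have "((\<lambda>y. 0) has_real_derivative (-2 * negp a)) (at a)"
      using True by (simp add: negp_def)
    then show ?thesis
      by (rule has_field_derivative_transform_within_open[where S="{0<..}"])
         (use True in \<open>auto simp: hsq_def negp_def\<close>)
  next
    case False
    with \<open>\<not> a < 0\<close> have a: "a = 0" by simp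
    have "((\<lambda>y. (hsq y - hsq 0) / (y - 0)) \<longlongrightarrow> 0) (at 0)"
    proof (rule Lim_null_comparison)
      show "\<forall>\<^sub>F x in at 0. norm ((hsq x - hsq 0) / (x - 0)) \<le> \<bar>x\<bar>"
      proof (rule always_eventually, rule allI)
        fix x :: real
        show "norm ((hsq x - hsq 0) / (x - 0)) \<le> \<bar>x\<bar>"
          by (cases "x < 0") (auto simp: hsq_def negp_def power2_eq_square abs_mult)
      qed
      show "((\<lambda>x. \<bar>x\<bar>) \<longlongrightarrow> 0) (at (0::real))"
        using tendsto_rabs[OF tendsto_ident_at[of 0 UNIV]] by simp
    qed
    then show ?thesis using a by (simp add: has_field_derivative_iff negp_def)
  qed
qed

lemma invariance_generic:
  fixes x x' :: "'v \<Rightarrow> real \<Rightarrow> real" and I :: "'v set"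
  assumes fin: "finite I" and tau: "0 \<le> \<tau>" and C: "0 \<le> C"
    and der: "\<And>v t. v \<in> I \<Longrightarrow> t \<in> {0..\<tau>} \<Longrightarrow> (x v has_real_derivative x' v t) (at t within {0..\<tau>})"
    and bnd: "\<And>v t. v \<in> I \<Longrightarrow> t \<in> {0..\<tau>} \<Longrightarrow> x v t < 0 \<Longrightarrow> x' v t \<ge> - C * (\<Sum>w\<in>I. negp (x w t))"
    and init: "\<And>v. v \<in> I \<Longrightarrow> x v 0 \<ge> 0"
  shows "\<And>v t. v \<in> I \<Longrightarrow> t \<in> {0..\<tau>} \<Longrightarrow> x v t \<ge> 0"
proof -
  define Q where "Q t = (\<Sum>v\<in>I. hsq (x v t))" for t
  define Q' where "Q' t = (\<Sum>v\<in>I. -2 * negp (x v t) * x' v t)" for t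
  define N where "N t = (\<Sum>v\<in>I. negp (x v t))" for t
  define K where "K = 2 * C * real (card I)"
  have K: "K \<ge> 0" using C by (simp add: K_def)
  have negp_ge: "negp a \<ge> 0" for a by (simp add: negp_def)
  have Qd: "(Q has_real_derivative Q' t) (at t within {0..\<tau>})" if "t \<in> {0..\<tau>}" for t
    unfolding Q_def Q'_def
  proof (rule DERIV_sum)
    fix v assume v: "v \<in> I"
    show "((\<lambda>t. hsq (x v t)) has_real_derivative -2 * negp (x v t) * x' v t) (at t within {0..\<tau>})"
      using DERIV_chain2[OF hsq_deriv der[OF v that]] by simp
  qed
  have QK: "Q' t \<le> K * Q t" if t: "t \<in> {0..\<tau>}" for t
  proof -
    have "Q' t \<le> (\<Sum>v\<in>I. 2 * C * N t * negp (x v t))"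
      unfolding Q'_def
    proof (rule sum_mono)
      fix v assume v: "v \<in> I"
      have N0: "N t \<ge> 0" unfolding N_def by (rule sum_nonneg) (simp add: negp_ge)
      show "-2 * negp (x v t) * x' v t \<le> 2 * C * N t * negp (x v t)"
      proof (cases "x v t < 0")
        case True
        have "x' v t \<ge> - C * N t" using bnd[OF v t True] by (simp add: N_def)
        then have "negp (x v t) * (- C * N t) \<le> negp (x v t) * x' v t"
          using negp_ge by (rule mult_left_mono)
        then show ?thesis by (simp add: algebra_simps)
      next
        case False
        then show ?thesis using C N0 by (simp add: negp_def)
      qed
    qed
    also have "\<dots> = 2 * C * (N t)^2"
      by (simp add: N_def power2_eq_square sum_distrib_left sum_distrib_right mult.assoc)
    also have "\<dots> \<le> 2 * C * (Q t * card I)"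
    proof -
      have "(N t)^2 \<le> (\<Sum>v\<in>I. (negp (x v t))^2) * card I"
        unfolding N_def by (rule sum_squared_le_sum_of_squares)
      then show ?thesis using C by (simp add: Q_def hsq_def mult_left_mono)
    qed
    finally show ?thesis by (simp add: K_def algebra_simps)
  qed
  define W where "W t = Q t * exp (- K * t)" for t
  define W' where "W' t = Q' t * exp (- K * t) + Q t * (exp (- K * t) * (- K))" for t
  have Wd: "(W has_real_derivative W' t) (at t within {0..\<tau>})" if "t \<in> {0..\<tau>}" for t
    unfolding W_def W'_def
    by (rule derivative_eq_intros Qd[OF that] refl | simp)+
  have W'neg: "W' t \<le> 0" if "t \<in> {0..\<tau>}" for t
  proof -
    have "W' t = (Q' t - K * Q t) * exp (- K * t)" by (simp add: W'_def algebra_simps)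
    moreover have "Q' t - K * Q t \<le> 0" using QK[OF that] by simp
    ultimately show ?thesis by (simp add: mult_nonpos_nonneg)
  qed
  have Wcont: "continuous_on {0..\<tau>} W"
    unfolding continuous_on_eq_continuous_within
    using Wd by (meson has_derivative_continuous has_field_derivative_def)
  have Q0: "Q 0 = 0" unfolding Q_def hsq_def negp_def using init by (auto intro!: sum.neutral)
  have Qnn: "Q t \<ge> 0" for t unfolding Q_def hsq_def by (auto intro!: sum_nonneg)
  fix v t assume v: "v \<in> I" and t: "t \<in> {0..\<tau>}"
  have "W t \<le> W 0"
  proof (rule DERIV_nonpos_imp_decreasing_open[of 0 t W])
    show "0 \<le> t" using t by simp
  next
    fix y :: real assume y: "0 < y" "y < t"
    then have yi: "y \<in> interior {0..\<tau>}" using t by auto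
    have "(W has_real_derivative W' y) (at y)"
      using Wd[of y] y t at_within_interior[OF yi] by auto
    then show "\<exists>d. (W has_real_derivative d) (at y) \<and> d \<le> 0"
      using W'neg[of y] y t by auto
  next
    show "continuous_on {0..t} W" using Wcont by (rule continuous_on_subset) (use t in auto)
  qed
  then have "Q t \<le> 0" using Q0 by (simp add: W_def zero_le_mult_iff mult_le_0_iff)
  with Qnn have "Q t = 0" by (simp add: order_antisym)
  then have "hsq (x v t) = 0" unfolding Q_def
    using sum_nonneg_eq_0_iff[OF fin, of "\<lambda>v. hsq (x v t)"] v by (auto simp: hsq_def)
  then show "x v t \<ge> 0" by (simp add: hsq_def negp_def)
qed

lemma adm_mono1:
  assumes adm: "admissible_fun E F" and eq: "\<forall>k. k \<noteq> j \<longrightarrow> x $ k = y $ k" and le: "x $ j \<le> y $ j"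
  shows "F i x \<le> F i y"
proof (cases "x $ j = y $ j")
  case True
  then have "x = y" using eq by (metis vec_eq_iff)
  then show ?thesis by simp
next
  case False
  with le have lt: "x $ j < y $ j" by simp
  show ?thesis
  proof (cases "(i, j) \<in> E")
    case True
    then have "strictly_incr_in (F i) j" using adm by (simp add: admissible_fun_def)
    then show ?thesis using eq lt unfolding strictly_incr_in_def by (meson less_imp_le)
  next
    case False
    then have "\<not> depends_on (F i) j" using adm by (simp add: admissible_fun_def)
    then have "F i x = F i y" using eq unfolding depends_on_def by blast
    then show ?thesis by simp
  qed
qed

lemma adm_mono:
  fixes x y :: "real^'n::finite"
  assumes adm: "admissible_fun E F" and le: "\<forall>k. x $ k \<le> y $ k"
  shows "F i x \<le> F i y"
proof -
  have "F i x \<le> F i (\<chi> k. if k \<in> S then y $ k else x $ k)" if "finite S" for S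
    using that
  proof (induction S rule: finite_induct)
    case empty
    then show ?case by simp
  next
    case (insert a S)
    have "F i (\<chi> k. if k \<in> S then y $ k else x $ k) \<le> F i (\<chi> k. if k \<in> insert a S then y $ k else x $ k)"
      by (rule adm_mono1[OF adm, where j = a]) (use insert le in auto)
    then show ?case using insert by linarith
  qed
  from this[of UNIV] show ?thesis by simp
qed

lemma adm_lower:
  fixes x :: "real^'n::finite"
  assumes adm: "admissible_fun E F" and M: "0 < M" and m: "0 \<le> m" "m \<le> M"
    and xm: "\<forall>j. x $ j \<ge> - m"
  shows "F i x \<ge> (m / M) * F i (\<chi> j. - M)"
proof -
  have "F i (\<chi> j. - m) \<le> F i x" by (rule adm_mono[OF adm]) (use xm in simp)
  moreover have "(\<chi> j. - m) = (1 - m / M) *\<^sub>R (0::real^'n) + (m / M) *\<^sub>R (\<chi> j. - M)"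
    using M by (simp add: vec_eq_iff)
  moreover have "F i ((1 - m / M) *\<^sub>R (0::real^'n) + (m / M) *\<^sub>R (\<chi> j. - M))
      \<ge> (1 - m / M) * F i 0 + (m / M) * F i (\<chi> j. - M)"
    by (rule concave_onD) (use adm M m in \<open>auto simp: admissible_fun_def\<close>)
  moreover have "F i 0 = 0" using adm by (simp add: admissible_fun_def)
  ultimately show ?thesis by simp
qed

lemma adm_cont:
  assumes adm: "admissible_fun E F"
  shows "continuous_on UNIV (F i)"
proof -
  from adm have "C2 (F i)" by (simp add: admissible_fun_def)
  then obtain D1 where "\<forall>x. (F i has_derivative blinfun_apply (D1 x)) (at x)"
    unfolding C2_def by blast
  then show ?thesis
    by (metis continuous_at_imp_continuous_on has_derivative_continuous)
qed

lemma prod_lower: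
  fixes a b B L n :: real
  assumes "0 \<le> B" "0 \<le> L" "0 \<le> n" "\<bar>a\<bar> \<le> B" "\<bar>b\<bar> \<le> B" "b \<ge> - n * L" "negp a \<le> n"
  shows "a * b \<ge> - (B * L * n + B * n)"
proof (cases "a \<ge> 0")
  case True
  show ?thesis
  proof (cases "b \<ge> 0")
    case True
    then show ?thesis using \<open>a \<ge> 0\<close> assms by (smt (verit) mult_nonneg_nonneg)
  next
    case False
    have "a * b \<ge> a * (- n * L)" using True assms by (intro mult_left_mono) auto
    moreover have "a * (n * L) \<le> B * (n * L)" using True assms
      by (intro mult_right_mono) (auto simp: mult_nonneg_nonneg)
    ultimately have "a * b \<ge> - (B * L * n)" by (simp add: algebra_simps)
    moreover have "B * n \<ge> 0" using assms by simp
    ultimately show ?thesis by linarith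
  qed
next
  case False
  then have "negp a = - a" by (simp add: negp_def)
  have "- a * b \<le> (- a) * B" using False assms by (intro mult_left_mono) auto
  moreover have "(- a) * B \<le> n * B" using False assms \<open>negp a = - a\<close> by (intro mult_right_mono) auto
  moreover have "B * L * n \<ge> 0" using assms by simp
  ultimately show ?thesis by (simp add: algebra_simps)
qed

lemma upper_comparison:
  fixes x x' :: "real \<Rightarrow> real"
  assumes t0: "0 \<le> t0" and c: "0 < c"
    and der: "\<And>t. t \<ge> t0 \<Longrightarrow> (x has_real_derivative x' t) (at t within {0..})"
    and ineq: "\<And>t. t \<ge> t0 \<Longrightarrow> x' t \<le> p - c * x t"
    and t: "t \<ge> t0"
  shows "x t \<le> p / c + (x t0 - p / c) * exp (- c * (t - t0))"
proof -
  define W where "W s = (x s - p / c) * exp (c * (s - t0))" for s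
  define W' where "W' s = x' s * exp (c * (s - t0)) + (x s - p / c) * (exp (c * (s - t0)) * c)" for s
  have Wd: "(W has_real_derivative W' s) (at s within {0..})" if "s \<ge> t0" for s
    unfolding W_def W'_def
    by (rule derivative_eq_intros der[OF that] refl | simp)+
  have "W t \<le> W t0"
  proof (rule DERIV_nonpos_imp_decreasing_open[of t0 t W])
    show "t0 \<le> t" using t by simp
  next
    fix y :: real assume y: "t0 < y" "y < t"
    then have yi: "y \<in> interior {0..}" using t0 by auto
    have "(W has_real_derivative W' y) (at y)"
      using Wd[of y] y at_within_interior[OF yi] by auto
    moreover have "W' y = (x' y + c * x y - p) * exp (c * (y - t0))"
      using c by (simp add: W'_def algebra_simps)
    moreover have "x' y + c * x y - p \<le> 0" using ineq[of y] y by simp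
    ultimately show "\<exists>d. (W has_real_derivative d) (at y) \<and> d \<le> 0"
      by (auto simp: mult_nonpos_nonneg)
  next
    show "continuous_on {t0..t} W"
      unfolding continuous_on_eq_continuous_within
      using Wd t0 by (meson atLeastAtMost_iff continuous_within_subset has_derivative_continuous
          has_field_derivative_def order.trans subset_iff atLeast_iff)
  qed
  then have "(x t - p / c) * exp (c * (t - t0)) \<le> x t0 - p / c" by (simp add: W_def)
  then have "(x t - p / c) * exp (c * (t - t0)) * exp (- c * (t - t0)) \<le> (x t0 - p / c) * exp (- c * (t - t0))"
    by (simp add: mult_right_mono)
  moreover have "exp (c * (t - t0)) * exp (- c * (t - t0)) = 1" by (simp add: exp_minus_inverse[symmetric] exp_add[symmetric])
  ultimately show ?thesis by (simp add: algebra_simps)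
qed

lemma lower_comparison:
  fixes x x' :: "real \<Rightarrow> real"
  assumes t0: "0 \<le> t0" and c: "0 < c"
    and der: "\<And>t. t \<ge> t0 \<Longrightarrow> (x has_real_derivative x' t) (at t within {0..})"
    and ineq: "\<And>t. t \<ge> t0 \<Longrightarrow> x' t \<ge> p - c * x t"
    and t: "t \<ge> t0"
  shows "x t \<ge> p / c + (x t0 - p / c) * exp (- c * (t - t0))"
proof -
  have "- x t \<le> (- p) / c + (- x t0 - (- p) / c) * exp (- c * (t - t0))"
  proof (rule upper_comparison[where x="\<lambda>s. - x s" and x'="\<lambda>s. - x' s", OF t0 c _ _ t])
    fix s :: real assume "s \<ge> t0"
    then show "((\<lambda>s. - x s) has_real_derivative - x' s) (at s within {0..})"
      using der by (auto intro!: DERIV_minus)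
    show "- x' s \<le> - p - c * - x s" using ineq[OF \<open>s \<ge> t0\<close>] by simp
  qed
  then show ?thesis by (simp add: algebra_simps)
qed

lemma exp_decay_eventually:
  fixes c :: real
  assumes "0 < c" "0 < e"
  shows "eventually (\<lambda>t. \<bar>K * exp (- c * (t - t0))\<bar> < e) at_top"
proof -
  have "((\<lambda>t. K * exp (- c * (t - t0))) \<longlongrightarrow> 0) at_top"
    using assms by real_asymp
  then have "((\<lambda>t. \<bar>K * exp (- c * (t - t0))\<bar>) \<longlongrightarrow> 0) at_top"
    using tendsto_rabs by fastforce
  then show ?thesis using assms(2) by (rule order_tendstoD(2))
qed


lemma negmul:
  fixes p q B N :: real
  assumes "0 \<le> p" "p \<le> N" "0 \<le> B" "q \<ge> - B"
  shows "p * q \<ge> - (B * N)"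
proof -
  have "p * q \<ge> p * (- B)" using assms by (intro mult_left_mono) auto
  moreover have "p * B \<le> N * B" using assms by (intro mult_right_mono) auto
  ultimately show ?thesis by (simp add: algebra_simps)
qed

lemma invariance:
  fixes f g :: "'n::finite \<Rightarrow> (real^'n) \<Rightarrow> real"
    and \<theta> \<delta> :: "'n \<Rightarrow> real"
    and R T :: "real \<Rightarrow> (real^'n)"
  assumes th: "\<forall>i. \<theta> i > 0" and de: "\<forall>i. \<delta> i > 0"
    and admf: "admissible_fun E_R f" and admg: "admissible_fun E_T g"
    and sol: "SURQT_solution f g \<theta> \<delta> R T"
    and om: "(R 0, T 0) \<in> Omega"
    and tau: "0 \<le> \<tau>"
  shows "0 \<le> R \<tau> $ i \<and> 0 \<le> T \<tau> $ i \<and> R \<tau> $ i + T \<tau> $ i \<le> 1"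
proof -
  define dR where "dR i s = T s $ i * f i (R s) - R s $ i * g i (T s) - \<theta> i * R s $ i" for i s
  define dT where "dT i s = R s $ i * g i (T s) - T s $ i * f i (R s) + \<delta> i * (1 - R s $ i - T s $ i)" for i s
  have Rd: "((\<lambda>s. R s $ i) has_real_derivative dR i s) (at s within {0..})" if "s \<ge> 0" for i s
    using sol that unfolding SURQT_solution_def dR_def by blast
  have Td: "((\<lambda>s. T s $ i) has_real_derivative dT i s) (at s within {0..})" if "s \<ge> 0" for i s
    using sol that unfolding SURQT_solution_def dT_def by blast
  have contw: "continuous_on {0..\<tau>} h" if "\<And>s. s \<ge> 0 \<Longrightarrow> (h has_real_derivative d s) (at s within {0..})" for h d
    unfolding continuous_on_eq_continuous_within
  proof
    fix s assume s: "s \<in> {0..\<tau>}"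
    have "continuous (at s within {0..}) h"
      using that[of s] s by (meson atLeastAtMost_iff has_derivative_continuous has_field_derivative_def)
    then show "continuous (at s within {0..\<tau>}) h"
      by (rule continuous_within_subset) auto
  qed
  have Rc: "continuous_on {0..\<tau>} (\<lambda>s. R s $ i)" for i by (rule contw, rule Rd)
  have Tc: "continuous_on {0..\<tau>} (\<lambda>s. T s $ i)" for i by (rule contw, rule Td)
  have Rvc: "continuous_on {0..\<tau>} R"
    using continuous_on_vec_lambda[of "{0..\<tau>}" "\<lambda>i s. R s $ i", OF Rc] by simp
  have Tvc: "continuous_on {0..\<tau>} T"
    using continuous_on_vec_lambda[of "{0..\<tau>}" "\<lambda>i s. T s $ i", OF Tc] by simp
  have fc: "continuous_on {0..\<tau>} (\<lambda>s. f i (R s))" for i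
    by (rule continuous_on_compose2[OF adm_cont[OF admf] Rvc]) auto
  have gc: "continuous_on {0..\<tau>} (\<lambda>s. g i (T s))" for i
    by (rule continuous_on_compose2[OF adm_cont[OF admg] Tvc]) auto
  define \<Phi> where "\<Phi> s = (\<Sum>i\<in>UNIV. \<bar>R s $ i\<bar> + \<bar>T s $ i\<bar> + \<bar>f i (R s)\<bar> + \<bar>g i (T s)\<bar> + \<theta> i + \<delta> i)" for s
  have \<Phi>c: "continuous_on {0..\<tau>} \<Phi>"
    unfolding \<Phi>_def by (intro continuous_intros Rc Tc fc gc)
  have "bounded (\<Phi> ` {0..\<tau>})"
    by (rule compact_imp_bounded, rule compact_continuous_image[OF \<Phi>c]) simp
  then obtain B where B: "B > 0" "\<And>s. s \<in> {0..\<tau>} \<Longrightarrow> \<bar>\<Phi> s\<bar> \<le> B"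
    unfolding bounded_pos by auto
  have inner_nn: "0 \<le> \<bar>R s $ i\<bar> + \<bar>T s $ i\<bar> + \<bar>f i (R s)\<bar> + \<bar>g i (T s)\<bar> + \<theta> i + \<delta> i" for s i
  proof -
    have "0 < \<theta> i" "0 < \<delta> i" using th de by auto
    then show ?thesis by (simp add: add_nonneg_nonneg)
  qed
  have inner_le: "\<bar>R s $ i\<bar> + \<bar>T s $ i\<bar> + \<bar>f i (R s)\<bar> + \<bar>g i (T s)\<bar> + \<theta> i + \<delta> i \<le> B"
    if s: "s \<in> {0..\<tau>}" for s i
  proof -
    have "\<bar>R s $ i\<bar> + \<bar>T s $ i\<bar> + \<bar>f i (R s)\<bar> + \<bar>g i (T s)\<bar> + \<theta> i + \<delta> i \<le> \<Phi> s"
      unfolding \<Phi>_def by (rule member_le_sum) (use inner_nn in auto)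
    then show ?thesis using B(2)[OF s] by linarith
  qed
  have bR: "\<bar>R s $ i\<bar> \<le> B" and bT: "\<bar>T s $ i\<bar> \<le> B" and bf: "\<bar>f i (R s)\<bar> \<le> B"
    and bg: "\<bar>g i (T s)\<bar> \<le> B" and bth: "\<theta> i \<le> B" and bde: "\<delta> i \<le> B"
    if s: "s \<in> {0..\<tau>}" for s i
  proof -
    have "0 < \<theta> i" "0 < \<delta> i" using th de by auto
    then show "\<bar>R s $ i\<bar> \<le> B" "\<bar>T s $ i\<bar> \<le> B" "\<bar>f i (R s)\<bar> \<le> B"
       "\<bar>g i (T s)\<bar> \<le> B" "\<theta> i \<le> B" "\<delta> i \<le> B"
      using inner_le[OF s, of i] abs_ge_zero[of "R s $ i"] abs_ge_zero[of "T s $ i"]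
        abs_ge_zero[of "f i (R s)"] abs_ge_zero[of "g i (T s)"] by linarith+
  qed
  have sumR: "(\<Sum>j\<in>UNIV. \<bar>R s $ j\<bar>) \<le> B" and sumT: "(\<Sum>j\<in>UNIV. \<bar>T s $ j\<bar>) \<le> B"
    if s: "s \<in> {0..\<tau>}" for s
  proof -
    have "(\<Sum>j\<in>UNIV. \<bar>R s $ j\<bar>) \<le> \<Phi> s" "(\<Sum>j\<in>UNIV. \<bar>T s $ j\<bar>) \<le> \<Phi> s"
          proof -
      have "\<bar>R s $ j\<bar> \<le> \<bar>R s $ j\<bar> + \<bar>T s $ j\<bar> + \<bar>f j (R s)\<bar> + \<bar>g j (T s)\<bar> + \<theta> j + \<delta> j"
        "\<bar>T s $ j\<bar> \<le> \<bar>R s $ j\<bar> + \<bar>T s $ j\<bar> + \<bar>f j (R s)\<bar> + \<bar>g j (T s)\<bar> + \<theta> j + \<delta> j" for j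
      proof -
        have "0 < \<theta> j" "0 < \<delta> j" using th de by auto
        then show "\<bar>R s $ j\<bar> \<le> \<bar>R s $ j\<bar> + \<bar>T s $ j\<bar> + \<bar>f j (R s)\<bar> + \<bar>g j (T s)\<bar> + \<theta> j + \<delta> j"
          "\<bar>T s $ j\<bar> \<le> \<bar>R s $ j\<bar> + \<bar>T s $ j\<bar> + \<bar>f j (R s)\<bar> + \<bar>g j (T s)\<bar> + \<theta> j + \<delta> j"
          using abs_ge_zero[of "R s $ j"] abs_ge_zero[of "T s $ j"]
            abs_ge_zero[of "f j (R s)"] abs_ge_zero[of "g j (T s)"] by linarith+
      qed
      then show "(\<Sum>j\<in>UNIV. \<bar>R s $ j\<bar>) \<le> \<Phi> s" "(\<Sum>j\<in>UNIV. \<bar>T s $ j\<bar>) \<le> \<Phi> s"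
        unfolding \<Phi>_def by (auto intro!: sum_mono)
    qed
    then show "(\<Sum>j\<in>UNIV. \<bar>R s $ j\<bar>) \<le> B" "(\<Sum>j\<in>UNIV. \<bar>T s $ j\<bar>) \<le> B"
      using B(2)[OF s] by linarith+
  qed
  define Lf where "Lf i = - f i (\<chi> j. - B) / B" for i
  define Lg where "Lg i = - g i (\<chi> j. - B) / B" for i
  define L where "L = (\<Sum>i\<in>UNIV. Lf i) + (\<Sum>i\<in>UNIV. Lg i)"
  have Lf0: "Lf i \<ge> 0" for i
  proof -
    have "f i (\<chi> j. - B) \<le> f i 0" by (rule adm_mono[OF admf]) (use B in simp)
    then show ?thesis using admf B unfolding Lf_def admissible_fun_def by (simp add: divide_nonpos_pos)
  qed
  have Lg0: "Lg i \<ge> 0" for i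
  proof -
    have "g i (\<chi> j. - B) \<le> g i 0" by (rule adm_mono[OF admg]) (use B in simp)
    then show ?thesis using admg B unfolding Lg_def admissible_fun_def by (simp add: divide_nonpos_pos)
  qed
  have LfL: "Lf i \<le> L" and LgL: "Lg i \<le> L" for i
  proof -
    have a: "Lf i \<le> (\<Sum>i\<in>UNIV. Lf i)" by (rule member_le_sum) (auto simp: Lf0)
    have b: "Lg i \<le> (\<Sum>i\<in>UNIV. Lg i)" by (rule member_le_sum) (auto simp: Lg0)
    have "(\<Sum>i\<in>UNIV. Lf i) \<ge> 0" "(\<Sum>i\<in>UNIV. Lg i) \<ge> 0" by (auto intro!: sum_nonneg simp: Lf0 Lg0)
    then show "Lf i \<le> L" "Lg i \<le> L" using a b unfolding L_def by linarith+
  qed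
  have L0: "L \<ge> 0" using LfL[of undefined] Lf0[of undefined] by linarith
  have negp0: "negp a \<ge> 0" for a by (simp add: negp_def)
  have negp_ge: "a \<ge> - negp a" for a by (simp add: negp_def)
  have negp_abs: "negp a \<le> \<bar>a\<bar>" for a by (simp add: negp_def)
  have flow: "f i (R s) \<ge> - (\<Sum>j\<in>UNIV. negp (R s $ j)) * L" if s: "s \<in> {0..\<tau>}" for s i
  proof -
    define m where "m = (\<Sum>j\<in>UNIV. negp (R s $ j))"
    have m0: "m \<ge> 0" unfolding m_def by (rule sum_nonneg) (simp add: negp0)
    have "m \<le> (\<Sum>j\<in>UNIV. \<bar>R s $ j\<bar>)" unfolding m_def by (rule sum_mono) (rule negp_abs)
    then have mB: "m \<le> B" using sumR[OF s] by linarith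
    have xm: "\<forall>j. R s $ j \<ge> - m"
    proof
      fix j
      have "negp (R s $ j) \<le> m" unfolding m_def by (rule member_le_sum) (auto simp: negp0)
      then show "R s $ j \<ge> - m" using negp_ge[of "R s $ j"] by linarith
    qed
    have "f i (R s) \<ge> (m / B) * f i (\<chi> j. - B)" by (rule adm_lower[OF admf B(1) m0 mB xm])
    also have "(m / B) * f i (\<chi> j. - B) = - m * Lf i" using B by (simp add: Lf_def)
    finally have "f i (R s) \<ge> - m * Lf i" .
    moreover have "- m * L \<le> - m * Lf i" using m0 LfL[of i] by (simp add: mult_left_mono)
    ultimately show ?thesis unfolding m_def by linarith
  qed
  have glow: "g i (T s) \<ge> - (\<Sum>j\<in>UNIV. negp (T s $ j)) * L" if s: "s \<in> {0..\<tau>}" for s i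
  proof -
    define m where "m = (\<Sum>j\<in>UNIV. negp (T s $ j))"
    have m0: "m \<ge> 0" unfolding m_def by (rule sum_nonneg) (simp add: negp0)
    have "m \<le> (\<Sum>j\<in>UNIV. \<bar>T s $ j\<bar>)" unfolding m_def by (rule sum_mono) (rule negp_abs)
    then have mB: "m \<le> B" using sumT[OF s] by linarith
    have xm: "\<forall>j. T s $ j \<ge> - m"
    proof
      fix j
      have "negp (T s $ j) \<le> m" unfolding m_def by (rule member_le_sum) (auto simp: negp0)
      then show "T s $ j \<ge> - m" using negp_ge[of "T s $ j"] by linarith
    qed
    have "g i (T s) \<ge> (m / B) * g i (\<chi> j. - B)" by (rule adm_lower[OF admg B(1) m0 mB xm])
    also have "(m / B) * g i (\<chi> j. - B) = - m * Lg i" using B by (simp add: Lg_def)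
    finally have "g i (T s) \<ge> - m * Lg i" .
    moreover have "- m * L \<le> - m * Lg i" using m0 LgL[of i] by (simp add: mult_left_mono)
    ultimately show ?thesis unfolding m_def by linarith
  qed
  define xv :: "'n \<times> nat \<Rightarrow> real \<Rightarrow> real" where
    "xv w s = (if snd w = 0 then R s $ fst w else if snd w = 1 then T s $ fst w
               else 1 - R s $ fst w - T s $ fst w)" for w s
  define xd :: "'n \<times> nat \<Rightarrow> real \<Rightarrow> real" where
    "xd w s = (if snd w = 0 then dR (fst w) s else if snd w = 1 then dT (fst w) s
               else - dR (fst w) s - dT (fst w) s)" for w s
  define I :: "('n \<times> nat) set" where "I = UNIV \<times> {0, 1, 2}"
  define C where "C = B * L + 3 * B"
  define N where "N s = (\<Sum>w\<in>I. negp (xv w s))" for s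
  have finI: "finite I" by (simp add: I_def)
  have N_eq: "N s = (\<Sum>j\<in>UNIV. negp (R s $ j) + negp (T s $ j) + negp (1 - R s $ j - T s $ j))" for s
  proof -
    have "N s = (\<Sum>j\<in>UNIV. \<Sum>k\<in>{0::nat, 1, 2}. negp (xv (j, k) s))"
      unfolding N_def I_def sum.cartesian_product by (simp add: case_prod_unfold)
    also have "\<dots> = (\<Sum>j\<in>UNIV. negp (R s $ j) + negp (T s $ j) + negp (1 - R s $ j - T s $ j))"
      by (simp add: xv_def add.assoc)
    finally show ?thesis .
  qed
  have NR: "(\<Sum>j\<in>UNIV. negp (R s $ j)) \<le> N s" and NT: "(\<Sum>j\<in>UNIV. negp (T s $ j)) \<le> N s" for s
    unfolding N_eq by (auto intro!: sum_mono simp: negp0 add_nonneg_nonneg)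
  have Nmem: "negp (xv w s) \<le> N s" if "w \<in> I" for w s
    unfolding N_def by (rule member_le_sum) (use that finI in \<open>auto simp: negp0\<close>)
  have N0: "N s \<ge> 0" for s unfolding N_def by (rule sum_nonneg) (simp add: negp0)
  have B0: "B \<ge> 0" using B by simp
  have C0: "C \<ge> 0" unfolding C_def using B0 L0 by simp
  have main: "xv w s \<ge> 0" if "w \<in> I" "s \<in> {0..\<tau>}" for w s
  proof (rule invariance_generic[OF finI tau C0, of xv xd])
    fix v s assume v: "v \<in> I" and s: "s \<in> {0..\<tau>}"
    have s0: "s \<ge> 0" using s by simp
    have "(xv v has_real_derivative xd v s) (at s within {0..})"
      using Rd[OF s0, of "fst v"] Td[OF s0, of "fst v"]
      unfolding xv_def xd_def by (auto intro!: derivative_eq_intros)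
    then show "(xv v has_real_derivative xd v s) (at s within {0..\<tau>})"
      by (rule DERIV_subset) auto
  next
    fix v s assume v: "v \<in> I" and s: "s \<in> {0..\<tau>}" and neg: "xv v s < 0"
    obtain i k where vik: "v = (i, k)" by force
    have k: "k = 0 \<or> k = 1 \<or> k = 2" using v vik by (auto simp: I_def)
    have NN: "(\<Sum>w\<in>I. negp (xv w s)) = N s" by (simp add: N_def)
    have iI: "(i, 0) \<in> I" "(i, 1) \<in> I" "(i, 2) \<in> I" by (auto simp: I_def)
    have nR: "negp (R s $ i) \<le> N s" using Nmem[OF iI(1), of s] by (simp add: xv_def)
    have nT: "negp (T s $ i) \<le> N s" using Nmem[OF iI(2), of s] by (simp add: xv_def)
    have nU: "negp (1 - R s $ i - T s $ i) \<le> N s" using Nmem[OF iI(3), of s] by (simp add: xv_def)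
    have fl: "f i (R s) \<ge> - N s * L"
      using flow[OF s, of i] NR[of s] L0 by (smt (verit, best) mult_right_mono)
    have gl: "g i (T s) \<ge> - N s * L"
      using glow[OF s, of i] NT[of s] L0 by (smt (verit, best) mult_right_mono)
    have th0: "0 < \<theta> i" and de0: "0 < \<delta> i" using th de by auto
    have Tf: "T s $ i * f i (R s) \<ge> - (B * L * N s + B * N s)"
      by (rule prod_lower[OF B0 L0 N0 bT[OF s] bf[OF s] _ nT]) (use fl in \<open>simp add: mult.commute\<close>)
    have Rg: "R s $ i * g i (T s) \<ge> - (B * L * N s + B * N s)"
      by (rule prod_lower[OF B0 L0 N0 bR[OF s] bg[OF s] _ nR]) (use gl in \<open>simp add: mult.commute\<close>)
    have BLN: "B * L * N s \<ge> 0" "B * N s \<ge> 0" using B0 L0 N0[of s] by auto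
    have CN: "- C * N s = - (B * L * N s) - 3 * (B * N s)" by (simp add: C_def algebra_simps)
    consider "k = 0" | "k = 1" | "k = 2" using k by blast
    then show "xd v s \<ge> - C * (\<Sum>w\<in>I. negp (xv w s))"
    proof cases
      case 1
      then have Rn: "R s $ i < 0" using neg vik by (simp add: xv_def)
      then have "negp (R s $ i) = - R s $ i" by (simp add: negp_def)
      have "negp (R s $ i) * (g i (T s) + \<theta> i) \<ge> - (B * N s)"
        by (rule negmul[OF negp0 nR B0]) (use bg[OF s, of i] th0 in \<open>linarith\<close>)
      then have "- R s $ i * g i (T s) - \<theta> i * R s $ i \<ge> - (B * N s)"
        using \<open>negp (R s $ i) = - R s $ i\<close> by (simp add: algebra_simps)
      moreover have "xd v s = dR i s" using 1 vik by (simp add: xd_def)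
      ultimately show ?thesis using Tf BLN CN unfolding NN dR_def by linarith
    next
      case 2
      then have Tn: "T s $ i < 0" using neg vik by (simp add: xv_def)
      then have "negp (T s $ i) = - T s $ i" by (simp add: negp_def)
      have "negp (T s $ i) * f i (R s) \<ge> - (B * N s)"
        by (rule negmul[OF negp0 nT B0]) (use bf[OF s, of i] in \<open>linarith\<close>)
      then have a: "- T s $ i * f i (R s) \<ge> - (B * N s)"
        using \<open>negp (T s $ i) = - T s $ i\<close> by simp
      have "\<delta> i * (1 - R s $ i - T s $ i) \<ge> - (N s * B)"
        by (rule negmul) (use de0 bde[OF s] N0[of s] negp_ge[of "1 - R s $ i - T s $ i"] nU in auto)
      moreover have "xd v s = dT i s" using 2 vik by (simp add: xd_def)
      ultimately show ?thesis using Rg a BLN CN unfolding NN dT_def by (simp add: algebra_simps)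
    next
      case 3
      have "- dR i s - dT i s = \<theta> i * R s $ i - \<delta> i * (1 - R s $ i - T s $ i)"
        by (simp add: dR_def dT_def algebra_simps)
      moreover have "1 - R s $ i - T s $ i < 0" using 3 neg vik by (simp add: xv_def)
      then have "\<delta> i * (1 - R s $ i - T s $ i) \<le> 0" using de0 by (simp add: mult_pos_neg less_imp_le)
      moreover have "\<theta> i * R s $ i \<ge> - (N s * B)"
        by (rule negmul) (use th0 bth[OF s] N0[of s] negp_ge[of "R s $ i"] nR in auto)
      moreover have "xd v s = - dR i s - dT i s" using 3 vik by (simp add: xd_def)
      ultimately show ?thesis using BLN CN unfolding NN by (simp add: algebra_simps)
    qed
  next
    fix v assume "v \<in> I"
    then show "xv v 0 \<ge> 0" using om by (auto simp: xv_def I_def Omega_def) (smt (verit))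
  qed (use that in auto)
  have "(i, 0) \<in> I" "(i, 1) \<in> I" "(i, 2) \<in> I" by (auto simp: I_def)
  from main[OF this(1), of \<tau>] main[OF this(2), of \<tau>] main[OF this(3), of \<tau>] tau
  show ?thesis by (simp add: xv_def)
qed

theorem theorem1:
  fixes E_R E_T :: "('n::finite \<times> 'n) set"
    and f g :: "'n \<Rightarrow> (real^'n) \<Rightarrow> real"
    and \<theta> \<delta> :: "'n \<Rightarrow> real"
    and R T :: "real \<Rightarrow> (real^'n)"
  assumes "strongly_connected E_R" and "strongly_connected E_T"
    and "\<forall>i. \<theta> i > 0" and "\<forall>i. \<delta> i > 0"
    and "admissible_fun E_R f" and "admissible_fun E_T g"
    and "SURQT_solution f g \<theta> \<delta> R T"
    and "(R 0, T 0) \<in> Omega"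
  shows "\<forall>i.
     Limsup at_top (\<lambda>t. ereal (R t $ i)) \<le> ereal (f i (\<chi> j. 1) / (f i (\<chi> j. 1) + \<theta> i)) \<and>
     Liminf at_top (\<lambda>t. ereal (T t $ i)) \<ge>
       ereal (\<theta> i * \<delta> i / ((f i (\<chi> j. 1) + \<theta> i) * (f i (\<chi> j. 1) + \<delta> i)))"
proof
  fix i
  note th = assms(3) and de = assms(4) and admf = assms(5) and admg = assms(6)
    and sol = assms(7) and om = assms(8)
  have inv: "0 \<le> R t $ j \<and> 0 \<le> T t $ j \<and> R t $ j + T t $ j \<le> 1" if "t \<ge> 0" for t j
    by (rule invariance[OF th de admf admg sol om that])
  define F where "F = f i (\<chi> j. 1)"
  have th0: "\<theta> i > 0" and de0: "\<delta> i > 0" using th de by auto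
  have F0: "F \<ge> 0"
  proof -
    have "f i 0 \<le> F" unfolding F_def by (rule adm_mono[OF admf]) simp
    then show ?thesis using admf by (simp add: admissible_fun_def)
  qed
  have fle: "f i (R t) \<le> F" if "t \<ge> 0" for t
    unfolding F_def by (rule adm_mono[OF admf]) (use inv[OF that] in \<open>smt (verit) vec_lambda_beta\<close>)
  have gge: "g i (T t) \<ge> 0" if "t \<ge> 0" for t
  proof -
    have "g i 0 \<le> g i (T t)" by (rule adm_mono[OF admg]) (use inv[OF that] in simp)
    then show ?thesis using admg by (simp add: admissible_fun_def)
  qed
  define dR where "dR s = T s $ i * f i (R s) - R s $ i * g i (T s) - \<theta> i * R s $ i" for s
  define dT where "dT s = R s $ i * g i (T s) - T s $ i * f i (R s) + \<delta> i * (1 - R s $ i - T s $ i)" for s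
  have Rd: "((\<lambda>s. R s $ i) has_real_derivative dR s) (at s within {0..})" if "s \<ge> 0" for s
    using sol that unfolding SURQT_solution_def dR_def by blast
  have Td: "((\<lambda>s. T s $ i) has_real_derivative dT s) (at s within {0..})" if "s \<ge> 0" for s
    using sol that unfolding SURQT_solution_def dT_def by blast
  define a where "a = F / (F + \<theta> i)"
  have Fth: "F + \<theta> i > 0" using F0 th0 by linarith
  have dRle: "dR s \<le> F - (F + \<theta> i) * R s $ i" if s: "s \<ge> 0" for s
  proof -
    have "T s $ i * f i (R s) \<le> T s $ i * F" using inv[OF s, of i] fle[OF s] by (simp add: mult_left_mono)
    also have "\<dots> \<le> (1 - R s $ i) * F" using inv[OF s, of i] F0 by (intro mult_right_mono) auto
    finally have "T s $ i * f i (R s) \<le> (1 - R s $ i) * F" .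
    moreover have "R s $ i * g i (T s) \<ge> 0" using inv[OF s, of i] gge[OF s] by simp
    ultimately show ?thesis unfolding dR_def by (simp add: algebra_simps)
  qed
  have Rup: "R t $ i \<le> F / (F + \<theta> i) + (R 0 $ i - F / (F + \<theta> i)) * exp (- (F + \<theta> i) * (t - 0))"
    if "t \<ge> 0" for t
    by (rule upper_comparison[where x="\<lambda>s. R s $ i", OF order_refl Fth Rd dRle that]) auto
  have Rev: "eventually (\<lambda>t. R t $ i < y) at_top" if y: "y > a" for y
  proof -
    have "eventually (\<lambda>t. \<bar>(R 0 $ i - a) * exp (- (F + \<theta> i) * (t - 0))\<bar> < y - a) at_top"
      by (rule exp_decay_eventually) (use Fth y in auto)
    moreover have "eventually (\<lambda>t::real. t \<ge> 0) at_top" by (rule eventually_ge_at_top)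
    ultimately show ?thesis
    proof eventually_elim
      case (elim t)
      then show ?case using Rup[of t] unfolding a_def by (smt (verit))
    qed
  qed
  have part1: "Limsup at_top (\<lambda>t. ereal (R t $ i)) \<le> ereal a"
    unfolding Limsup_le_iff
  proof (intro allI impI)
    fix y :: ereal assume "y > ereal a"
    then obtain z where z: "ereal a < ereal z" "ereal z < y" using ereal_dense2 by blast
    have "eventually (\<lambda>t. R t $ i < z) at_top" using z(1) by (intro Rev) simp
    then show "eventually (\<lambda>t. y > ereal (R t $ i)) at_top"
    proof eventually_elim
      case (elim t)
      then have "ereal (R t $ i) < ereal z" by simp
      then show ?case using z(2) by (rule less_trans)
    qed
  qed
  define c where "c = F + \<delta> i"
  have c0: "c > 0" using F0 de0 unfolding c_def by linarith
  define tg where "tg = \<theta> i * \<delta> i / ((F + \<theta> i) * (F + \<delta> i))"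
  have Fde: "F + \<delta> i > 0" using c0 c_def by simp
  have tg_eq: "\<delta> i * (1 - a) / c = tg"
    unfolding a_def c_def tg_def using Fth Fde by (simp add: field_simps)
  have part2: "Liminf at_top (\<lambda>t. ereal (T t $ i)) \<ge> ereal tg"
    unfolding le_Liminf_iff
  proof (intro allI impI)
    fix y :: ereal assume "y < ereal tg"
    then obtain z where z: "y < ereal z" "ereal z < ereal tg" using ereal_dense2 by blast
    have ztg: "z < tg" using z by simp
    define e where "e = (tg - z) * c / (2 * \<delta> i)"
    have e0: "e > 0" unfolding e_def using ztg c0 de0 by simp
    define p where "p = \<delta> i * (1 - a - e)"
    have "p / c = \<delta> i * (1 - a) / c - \<delta> i * e / c"
      unfolding p_def using c0 by (simp add: field_simps)
    moreover have "\<delta> i * e / c = (tg - z) / 2"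
      unfolding e_def using c0 de0 by (simp add: field_simps)
    ultimately have pcc: "p / c = tg - (tg - z) / 2" using tg_eq by simp
    have pc: "p / c - z = (tg - z) / 2" unfolding pcc by (simp add: field_simps)
    have "eventually (\<lambda>t. R t $ i < a + e) at_top" using e0 by (intro Rev) simp
    then obtain t1 where t1: "\<And>t. t \<ge> t1 \<Longrightarrow> R t $ i < a + e"
      unfolding eventually_at_top_linorder by blast
    define t2 where "t2 = max t1 0"
    have t2: "t2 \<ge> 0" "t2 \<ge> t1" by (auto simp: t2_def)
    have dTge: "dT s \<ge> p - c * T s $ i" if s: "s \<ge> t2" for s
    proof -
      have s0: "s \<ge> 0" using s t2 by linarith
      have "T s $ i * f i (R s) \<le> T s $ i * F" using inv[OF s0, of i] fle[OF s0] by (simp add: mult_left_mono)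
      moreover have "R s $ i * g i (T s) \<ge> 0" using inv[OF s0, of i] gge[OF s0] by simp
      moreover have "\<delta> i * R s $ i \<le> \<delta> i * (a + e)" using t1[of s] s t2 de0 by simp
      ultimately show ?thesis unfolding dT_def p_def c_def by (simp add: algebra_simps)
    qed
    have Tlow: "T t $ i \<ge> p / c + (T t2 $ i - p / c) * exp (- c * (t - t2))" if "t \<ge> t2" for t
      by (rule lower_comparison[where x="\<lambda>s. T s $ i", OF t2(1) c0 _ dTge that])
         (use Td t2 in auto)
    have "eventually (\<lambda>t. \<bar>(T t2 $ i - p / c) * exp (- c * (t - t2))\<bar> < (tg - z) / 2) at_top"
      by (rule exp_decay_eventually) (use c0 ztg in auto)
    moreover have "eventually (\<lambda>t::real. t \<ge> t2) at_top" by (rule eventually_ge_at_top)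
    ultimately have "eventually (\<lambda>t. z < T t $ i) at_top"
    proof eventually_elim
      case (elim t)
      then show ?case using Tlow[of t] pc by (smt (verit))
    qed
    then show "eventually (\<lambda>t. y < ereal (T t $ i)) at_top"
    proof eventually_elim
      case (elim t)
      then have "ereal z < ereal (T t $ i)" by simp
      with z(1) show ?case by (rule less_trans)
    qed
  qed
  show "Limsup at_top (\<lambda>t. ereal (R t $ i)) \<le> ereal (f i (\<chi> j. 1) / (f i (\<chi> j. 1) + \<theta> i)) \<and>
     Liminf at_top (\<lambda>t. ereal (T t $ i)) \<ge>
       ereal (\<theta> i * \<delta> i / ((f i (\<chi> j. 1) + \<theta> i) * (f i (\<chi> j. 1) + \<delta> i)))"
    using part1 part2 unfolding a_def tg_def F_def by simp
qed

end
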